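(* For every pattern class $\mathcal{P}$, \[ \mathsf{opt}_{\operatorname{bandit}}^{\operatorname{adap}}(\mathcal{P})=\mathsf{opt\_d}_{\operatorname{bandit}}^{\operatorname{adap}}(\mathcal{P}). \]
   Context: $\mathcal{X}$ is a set and $\mathcal{Y}$ a countable label set. A pattern is a finite sequence of examples in $\mathcal{X}\times\mathcal{Y}$; a pattern class is a nonempty set of patterns closed under subsequences. A bandit history of (instance, correct/incorrect, prediction) triples is realizable by $\mathcal{P}$ if some choice of true labels agreeing with all observations makes the labeled sequence an element of $\mathcal{P}$. Primal game: in each round the adversary chooses $x_t$ (from the history), the learner chooses a distribution $\pi^{(t)}$ on $\mathcal{Y}$ (from history and $x_t$) and reveals it, the adversary chooses a distribution $\tau^{(t)}$ on $\mathcal{Y}$ (from history, $x_t$, $\pi^{(t)}$), then $\hat y_t\sim\pi^{(t)}$ and $y_t\sim\tau^{(t)}$ are drawn and the learner learns only whether $\hat y_t=y_t$; $\mathsf{opt}_{\operatorname{bandit}}^{\operatorname{adap}}(\mathcal{P})=\inf_{\text{learner}}\sup_{\text{adversary}}$ expected number of mistakes ($\hat y_t\neq y_t$). Dual game: in each round the adversary chooses $x_t$ and a distribution $\tau^{(t)}$ (from the history) and reveals both; the learner chooses $\pi^{(t)}$ (from history, $x_t$, $\tau^{(t)}$), $\hat y_t\sim\pi^{(t)}$, $y_t\sim\tau^{(t)}$, and the learner learns only whether $\hat y_t=y_t$; $\mathsf{opt\_d}_{\operatorname{bandit}}^{\operatorname{adap}}(\mathcal{P})=\sup_{\text{adversary}}\inf_{\text{learner}}$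 expected number of mistakes. In both games adversaries must be consistent with $\mathcal{P}$: whenever the history is realizable, every $y$ in the support of $\tau^{(t)}$ keeps the extended history realizable. *)

theory Defs
  imports "HOL-Probability.Probability_Mass_Function" "HOL-Library.Sublist"
begin

type_synonym ('x, 'y) pattern = "('x \<times> 'y) list"

definition pattern_class :: "('x, 'y) pattern set \<Rightarrow> bool" where
  "pattern_class P \<longleftrightarrow> P \<noteq> {} \<and> (\<forall>s \<in> P. \<forall>s'. subseq s' s \<longrightarrow> s' \<in> P)"

text \<open>A history entry is (instance, correct?, prediction).\<close>
type_synonym ('x, 'y) bhist = "('x \<times> bool \<times> 'y) list"

definition agrees :: "('x, 'y) bhist \<Rightarrow> 'y list \<Rightarrow> bool" where
  "agrees h ys \<longleftrightarrow> length ys = length h \<and>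
     (\<forall>i < length h. (fst (snd (h ! i)) \<longleftrightarrow> ys ! i = snd (snd (h ! i))))"

definition realizable :: "('x, 'y) pattern set \<Rightarrow> ('x, 'y) bhist \<Rightarrow> bool" where
  "realizable P h \<longleftrightarrow> (\<exists>ys. agrees h ys \<and> zip (map fst h) ys \<in> P)"

definition realizable_ext :: "('x, 'y) pattern set \<Rightarrow> ('x, 'y) bhist \<Rightarrow> 'x \<Rightarrow> 'y \<Rightarrow> bool" where
  "realizable_ext P h x y \<longleftrightarrow> (\<exists>ys. agrees h ys \<and> zip (map fst h) ys @ [(x, y)] \<in> P)"

definition mistakes :: "('x, 'y) bhist \<Rightarrow> nat" where
  "mistakes h = length (filter (\<lambda>e. \<not> fst (snd e)) h)"

definition round_step :: "('x, 'y) bhist \<Rightarrow> 'x \<Rightarrow> 'y pmf \<Rightarrow> 'y pmf \<Rightarrow> ('x, 'y) bhist pmf" where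
  "round_step h x \<pi> \<tau> = map_pmf (\<lambda>(yh, y). h @ [(x, yh = y, yh)]) (pair_pmf \<pi> \<tau>)"

text \<open>Learner: history, x_t \<mapsto> \<pi>. Adversary: (history \<mapsto> x_t,
  history, x_t, \<pi> \<mapsto> \<tau>).\<close>
primrec primal_hist ::
  "(('x, 'y) bhist \<Rightarrow> 'x \<Rightarrow> 'y pmf) \<Rightarrow> (('x, 'y) bhist \<Rightarrow> 'x) \<Rightarrow>
   (('x, 'y) bhist \<Rightarrow> 'x \<Rightarrow> 'y pmf \<Rightarrow> 'y pmf) \<Rightarrow> nat \<Rightarrow> ('x, 'y) bhist pmf" where
  "primal_hist L ax aT 0 = return_pmf []"
| "primal_hist L ax aT (Suc n) = primal_hist L ax aT n \<bind>
     (\<lambda>h. let x = ax h; \<pi> = L h x in round_step h x \<pi> (aT h x \<pi>))"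

definition primal_mistakes where
  "primal_mistakes L ax aT =
     (SUP n. \<integral>\<^sup>+ h. of_nat (mistakes h) \<partial>measure_pmf (primal_hist L ax aT n))"

definition primal_consistent ::
  "('x, 'y) pattern set \<Rightarrow> (('x, 'y) bhist \<Rightarrow> 'x) \<Rightarrow>
   (('x, 'y) bhist \<Rightarrow> 'x \<Rightarrow> 'y pmf \<Rightarrow> 'y pmf) \<Rightarrow> bool" where
  "primal_consistent P ax aT \<longleftrightarrow>
     (\<forall>h \<pi>. realizable P h \<longrightarrow> (\<forall>y \<in> set_pmf (aT h (ax h) \<pi>). realizable_ext P h (ax h) y))"

definition opt_bandit_adap :: "('x, 'y::countable) pattern set \<Rightarrow> ennreal" where
  "opt_bandit_adap P =
     (INF L. SUP (ax, aT) \<in> {(ax, aT). primal_consistent P ax aT}. primal_mistakes L ax aT)"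

text \<open>Adversary: (history \<mapsto> x_t, history \<mapsto> \<tau>), both revealed.
  Learner: history, x_t, \<tau> \<mapsto> \<pi>.\<close>
primrec dual_hist ::
  "(('x, 'y) bhist \<Rightarrow> 'x) \<Rightarrow> (('x, 'y) bhist \<Rightarrow> 'y pmf) \<Rightarrow>
   (('x, 'y) bhist \<Rightarrow> 'x \<Rightarrow> 'y pmf \<Rightarrow> 'y pmf) \<Rightarrow> nat \<Rightarrow> ('x, 'y) bhist pmf" where
  "dual_hist ax aT L 0 = return_pmf []"
| "dual_hist ax aT L (Suc n) = dual_hist ax aT L n \<bind>
     (\<lambda>h. let x = ax h; \<tau> = aT h in round_step h x (L h x \<tau>) \<tau>)"

definition dual_mistakes where
  "dual_mistakes ax aT L =
     (SUP n. \<integral>\<^sup>+ h. of_nat (mistakes h) \<partial>measure_pmf (dual_hist ax aT L n))"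

definition dual_consistent ::
  "('x, 'y) pattern set \<Rightarrow> (('x, 'y) bhist \<Rightarrow> 'x) \<Rightarrow> (('x, 'y) bhist \<Rightarrow> 'y pmf) \<Rightarrow> bool" where
  "dual_consistent P ax aT \<longleftrightarrow>
     (\<forall>h. realizable P h \<longrightarrow> (\<forall>y \<in> set_pmf (aT h). realizable_ext P h (ax h) y))"

definition opt_d_bandit_adap :: "('x, 'y::countable) pattern set \<Rightarrow> ennreal" where
  "opt_d_bandit_adap P =
     (SUP (ax, aT) \<in> {(ax, aT). dual_consistent P ax aT}. INF L. dual_mistakes ax aT L)"

end

theory Submission
  imports Defs
begin

primrec dfrom ::
  "('x, 'y) bhist \<Rightarrow> (('x, 'y) bhist \<Rightarrow> 'x) \<Rightarrow> (('x, 'y) bhist \<Rightarrow> 'y pmf) \<Rightarrow>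
   (('x, 'y) bhist \<Rightarrow> 'x \<Rightarrow> 'y pmf \<Rightarrow> 'y pmf) \<Rightarrow> nat \<Rightarrow> ('x, 'y) bhist pmf" where
  "dfrom h0 ax aT L 0 = return_pmf h0"
| "dfrom h0 ax aT L (Suc n) = dfrom h0 ax aT L n \<bind>
     (\<lambda>h. let x = ax h; \<tau> = aT h in round_step h x (L h x \<tau>) \<tau>)"

definition dstep where
  "dstep ax aT L = (\<lambda>h. let x = ax h; \<tau> = aT h in round_step h x (L h x \<tau>) \<tau>)"

lemma dfrom_Suc': "dfrom h0 ax aT L (Suc n) = dfrom h0 ax aT L n \<bind> dstep ax aT L"
  by (simp add: dstep_def)

declare dfrom.simps(2)[simp del]
declare dfrom_Suc'[simp]

lemma dual_hist_dfrom: "dual_hist ax aT L n = dfrom [] ax aT L n"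
  by (induction n) (simp_all add: dstep_def)

lemma dfrom_first: "dfrom h ax aT L (Suc n) = dstep ax aT L h \<bind> (\<lambda>h'. dfrom h' ax aT L n)"
proof (induction n arbitrary: h)
  case 0
  then show ?case by (simp add: dfrom_Suc' bind_return_pmf bind_return_pmf')
next
  case (Suc n)
  have "dfrom h ax aT L (Suc (Suc n)) = dfrom h ax aT L (Suc n) \<bind> dstep ax aT L"
    by (rule dfrom_Suc')
  also have "\<dots> = dstep ax aT L h \<bind> (\<lambda>h'. dfrom h' ax aT L n \<bind> dstep ax aT L)"
    by (simp only: Suc.IH bind_assoc_pmf)
  also have "\<dots> = dstep ax aT L h \<bind> (\<lambda>h'. dfrom h' ax aT L (Suc n))"
    by (simp only: dfrom_Suc')
  finally show ?case .
qed

lemma set_round_step: "set_pmf (round_step h x \<pi> \<tau>) \<subseteq> {h @ [e] |e. True}"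
  by (auto simp: round_step_def)

lemma set_dstep: "g \<in> set_pmf (dstep ax aT L h) \<Longrightarrow> \<exists>e. g = h @ [e]"
  by (auto simp: dstep_def round_step_def Let_def)

lemma set_dfrom: "g \<in> set_pmf (dfrom h ax aT L n) \<Longrightarrow> \<exists>r. g = h @ r"
proof (induction n arbitrary: g)
  case 0 then show ?case by simp
next
  case (Suc n)
  then obtain g0 where g0: "g0 \<in> set_pmf (dfrom h ax aT L n)" "g \<in> set_pmf (dstep ax aT L g0)"
    by auto
  then show ?case using Suc.IH[OF g0(1)] set_dstep[OF g0(2)] by auto
qed

lemma dfrom_agree:
  assumes "\<And>r. ax (h @ r) = ax' (h @ r)" "\<And>r. aT (h @ r) = aT' (h @ r)"
  shows "dfrom h ax aT L n = dfrom h ax' aT' L n"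
proof (induction n)
  case 0 then show ?case by simp
next
  case (Suc n)
  show ?case unfolding dfrom_Suc' Suc
  proof (rule bind_pmf_cong[OF refl])
    fix g assume "g \<in> set_pmf (dfrom h ax' aT' L n)"
    then obtain r where "g = h @ r" using set_dfrom by blast
    then show "dstep ax aT L g = dstep ax' aT' L g"
      using assms by (simp add: dstep_def)
  qed
qed

lemma mistakes_snoc: "mistakes h \<le> mistakes (h @ [e])"
  by (simp add: mistakes_def)

definition EE where
  "EE h ax aT L n = (\<integral>\<^sup>+ g. of_nat (mistakes g) \<partial>measure_pmf (dfrom h ax aT L n))"

definition MM where "MM h ax aT L = (SUP n. EE h ax aT L n)"

lemma dstep_mist: "(\<integral>\<^sup>+ g'. of_nat (mistakes g) \<partial>measure_pmf (dstep ax aT L g)) \<le> (\<integral>\<^sup>+ g'. of_nat (mistakes g') \<partial>measure_pmf (dstep ax aT L g))"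
proof (rule nn_integral_mono_AE)
  show "AE g' in measure_pmf (dstep ax aT L g). of_nat (mistakes g) \<le> (of_nat (mistakes g') :: ennreal)"
    unfolding AE_measure_pmf_iff
  proof
    fix g' assume "g' \<in> set_pmf (dstep ax aT L g)"
    then obtain e where "g' = g @ [e]" using set_dstep by blast
    then show "of_nat (mistakes g) \<le> (of_nat (mistakes g') :: ennreal)"
      using mistakes_snoc by simp
  qed
qed

lemma EE_mono: "EE h ax aT L n \<le> EE h ax aT L (Suc n)"
proof -
  have "EE h ax aT L (Suc n) = (\<integral>\<^sup>+ g. (\<integral>\<^sup>+ g'. of_nat (mistakes g') \<partial>measure_pmf (dstep ax aT L g)) \<partial>measure_pmf (dfrom h ax aT L n))"
    by (simp add: EE_def dfrom_Suc')
  also have "\<dots> \<ge> (\<integral>\<^sup>+ g. (\<integral>\<^sup>+ g'. of_nat (mistakes g) \<partial>measure_pmf (dstep ax aT L g)) \<partial>measure_pmf (dfrom h ax aT L n))"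
    by (intro nn_integral_mono dstep_mist)
  finally show ?thesis by (simp add: EE_def)
qed

lemma EE_Suc: "EE h ax aT L (Suc n) = (\<integral>\<^sup>+ g. EE g ax aT L n \<partial>measure_pmf (dstep ax aT L h))"
  by (simp only: EE_def dfrom_first nn_integral_bind_pmf)

lemma MM_ge: "MM h ax aT L \<ge> (\<integral>\<^sup>+ g. MM g ax aT L \<partial>measure_pmf (dstep ax aT L h))"
proof -
  have inc: "incseq (\<lambda>n g. EE g ax aT L n)"
    by (intro incseq_SucI le_funI EE_mono)
  have "(\<integral>\<^sup>+ g. MM g ax aT L \<partial>measure_pmf (dstep ax aT L h)) = (SUP n. (\<integral>\<^sup>+ g. EE g ax aT L n \<partial>measure_pmf (dstep ax aT L h)))"
    unfolding MM_def by (rule nn_integral_monotone_convergence_SUP[OF inc]) simp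
  also have "\<dots> = (SUP n. EE h ax aT L (Suc n))" by (simp add: EE_Suc)
  also have "\<dots> \<le> MM h ax aT L" unfolding MM_def by (intro SUP_mono) auto
  finally show ?thesis .
qed

lemma MM_ge_mistakes: "MM h ax aT L \<ge> of_nat (mistakes h)"
proof -
  have "EE h ax aT L 0 = of_nat (mistakes h)" by (simp add: EE_def)
  then show ?thesis unfolding MM_def by (metis SUP_upper UNIV_I)
qed

definition Adv :: "('x, 'y) pattern set \<Rightarrow> ((('x, 'y) bhist \<Rightarrow> 'x) \<times> (('x, 'y) bhist \<Rightarrow> 'y pmf)) set" where
  "Adv P = {\<alpha>. dual_consistent P (fst \<alpha>) (snd \<alpha>)}"

definition JJ where "JJ h ax aT = (INF L. MM h ax aT L)"

definition VV where "VV P h = (SUP \<alpha>\<in>Adv P. JJ h (fst \<alpha>) (snd \<alpha>))"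

lemma VV_ge_mistakes:
  assumes "Adv P \<noteq> {}"
  shows "of_nat (mistakes h) \<le> VV P h"
proof -
  obtain \<alpha> where a: "\<alpha> \<in> Adv P" using assms by blast
  have "of_nat (mistakes h) \<le> JJ h (fst \<alpha>) (snd \<alpha>)"
    unfolding JJ_def by (rule INF_greatest) (rule MM_ge_mistakes)
  also have "\<dots> \<le> VV P h" unfolding VV_def using a by (rule SUP_upper)
  finally show ?thesis .
qed

lemma round_integral:
  "(\<integral>\<^sup>+ g. F g \<partial>measure_pmf (round_step h x \<pi> \<tau>)) =
   (\<integral>\<^sup>+ k. \<integral>\<^sup>+ y. F (h @ [(x, k = y, k)]) \<partial>measure_pmf \<tau> \<partial>measure_pmf \<pi>)"
  by (simp add: round_step_def nn_integral_pair_pmf')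

lemma int_if:
  "(\<integral>\<^sup>+ y. (if k = y then A else B) \<partial>measure_pmf \<tau>) =
    ennreal (pmf \<tau> k) * A + ennreal (1 - pmf \<tau> k) * B"
proof -
  have "(\<integral>\<^sup>+ y. (if k = y then A else B) \<partial>measure_pmf \<tau>) =
        (\<integral>\<^sup>+ y. A * indicator {k} y + B * indicator (UNIV - {k}) y \<partial>measure_pmf \<tau>)"
    by (intro nn_integral_cong) (auto split: split_indicator)
  also have "\<dots> = (\<integral>\<^sup>+ y. A * indicator {k} y \<partial>measure_pmf \<tau>) + (\<integral>\<^sup>+ y. B * indicator (UNIV - {k}) y \<partial>measure_pmf \<tau>)"
    by (rule nn_integral_add) auto
  also have "\<dots> = A * emeasure (measure_pmf \<tau>) {k} + B * emeasure (measure_pmf \<tau>) (UNIV - {k})"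
    by (simp add: nn_integral_cmult_indicator)
  also have "emeasure (measure_pmf \<tau>) {k} = ennreal (pmf \<tau> k)"
    by (simp add: emeasure_pmf_single)
  also have "emeasure (measure_pmf \<tau>) (UNIV - {k}) = ennreal (1 - pmf \<tau> k)"
    using measure_pmf.prob_compl[of "{k}" \<tau>]
    by (simp add: measure_pmf.emeasure_eq_measure measure_pmf_single)
  finally show ?thesis by (simp add: mult.commute)
qed

lemma sup_split:
  fixes f g :: "'a \<Rightarrow> ennreal"
  assumes I: "I \<noteq> {}" and c: "c < p * (SUP i\<in>I. f i) + q * (SUP i\<in>I. g i)"
  shows "\<exists>i\<in>I. \<exists>j\<in>I. c < p * f i + q * g j"
proof (rule ccontr)
  assume "\<not> ?thesis"
  then have le: "\<And>i j. i \<in> I \<Longrightarrow> j \<in> I \<Longrightarrow> p * f i + q * g j \<le> c" by (auto simp: not_less)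
  have "p * (SUP i\<in>I. f i) + q * (SUP i\<in>I. g i) = (SUP i\<in>I. p * f i) + (SUP j\<in>I. q * g j)"
    by (simp add: SUP_mult_left_ennreal)
  also have "\<dots> = (SUP i\<in>I. p * f i + (SUP j\<in>I. q * g j))"
    by (rule ennreal_SUP_add_left[symmetric, OF I])
  also have "\<dots> = (SUP i\<in>I. SUP j\<in>I. p * f i + q * g j)"
    by (simp add: ennreal_SUP_add_right[OF I])
  also have "\<dots> \<le> c" by (intro SUP_least le)
  finally show False using c by simp
qed

definition selc :: "('x, 'y) bhist \<Rightarrow> 'x \<Rightarrow> ('x, 'y) bhist \<Rightarrow> (bool \<times> 'y) option" where
  "selc h x g = (if length h < length g \<and> take (length h) g = h \<and> fst (g ! length h) = x
                 then Some (snd (g ! length h)) else None)"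

definition cax where
  "cax h x \<alpha>T \<alpha>F \<alpha>0 g = (if g = h then x else case selc h x g of
      Some (b, k) \<Rightarrow> fst (if b then \<alpha>T k else \<alpha>F k) g | None \<Rightarrow> fst \<alpha>0 g)"

definition caT where
  "caT h x \<tau> \<alpha>T \<alpha>F \<alpha>0 g = (if g = h then \<tau> else case selc h x g of
      Some (b, k) \<Rightarrow> snd (if b then \<alpha>T k else \<alpha>F k) g | None \<Rightarrow> snd \<alpha>0 g)"

lemma selc_child: "selc h x ((h @ [(x, b, k)]) @ r) = Some (b, k)"
  by (simp add: selc_def nth_append)

lemma cax_child: "cax h x \<alpha>T \<alpha>F \<alpha>0 ((h @ [(x, b, k)]) @ r) = fst (if b then \<alpha>T k else \<alpha>F k) ((h @ [(x, b, k)]) @ r)"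
proof -
  have "(h @ [(x, b, k)]) @ r \<noteq> h" by (metis append_self_conv append_assoc list.distinct(1) append_Cons)
  then show ?thesis unfolding cax_def selc_child by simp
qed

lemma caT_child: "caT h x \<tau> \<alpha>T \<alpha>F \<alpha>0 ((h @ [(x, b, k)]) @ r) = snd (if b then \<alpha>T k else \<alpha>F k) ((h @ [(x, b, k)]) @ r)"
proof -
  have "(h @ [(x, b, k)]) @ r \<noteq> h" by (metis append_self_conv append_assoc list.distinct(1) append_Cons)
  then show ?thesis unfolding caT_def selc_child by simp
qed

lemma comp_consistent:
  assumes T: "\<And>k. \<alpha>T k \<in> Adv P" and F: "\<And>k. \<alpha>F k \<in> Adv P" and Z: "\<alpha>0 \<in> Adv P"
    and tau: "set_pmf \<tau> \<subseteq> {y. realizable_ext P h x y}"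
  shows "(cax h x \<alpha>T \<alpha>F \<alpha>0, caT h x \<tau> \<alpha>T \<alpha>F \<alpha>0) \<in> Adv P"
  unfolding Adv_def dual_consistent_def
proof (simp, intro allI impI ballI)
  fix g y assume r: "realizable P g" and y: "y \<in> set_pmf (caT h x \<tau> \<alpha>T \<alpha>F \<alpha>0 g)"
  show "realizable_ext P g (cax h x \<alpha>T \<alpha>F \<alpha>0 g) y"
  proof (cases "g = h")
    case True
    then show ?thesis using y tau by (auto simp: cax_def caT_def)
  next
    case False
    show ?thesis
    proof (cases "selc h x g")
      case None
      then show ?thesis using False y Z r by (auto simp: cax_def caT_def Adv_def dual_consistent_def)
    next
      case (Some bk)
      obtain b k where bk: "bk = (b, k)" by (cases bk)
      show ?thesis
      proof (cases b)
        case True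
        then show ?thesis using False y T[of k] r Some bk by (auto simp: cax_def caT_def Adv_def dual_consistent_def)
      next
        case False
        then show ?thesis using \<open>g \<noteq> h\<close> y F[of k] r Some bk by (auto simp: cax_def caT_def Adv_def dual_consistent_def)
      qed
    qed
  qed
qed

lemma MM_comp_child:
  "MM (h @ [(x, b, k)]) (cax h x \<alpha>T \<alpha>F \<alpha>0) (caT h x \<tau> \<alpha>T \<alpha>F \<alpha>0) L =
   MM (h @ [(x, b, k)]) (fst (if b then \<alpha>T k else \<alpha>F k)) (snd (if b then \<alpha>T k else \<alpha>F k)) L"
proof -
  have "\<And>n. dfrom (h @ [(x, b, k)]) (cax h x \<alpha>T \<alpha>F \<alpha>0) (caT h x \<tau> \<alpha>T \<alpha>F \<alpha>0) L n =
            dfrom (h @ [(x, b, k)]) (fst (if b then \<alpha>T k else \<alpha>F k)) (snd (if b then \<alpha>T k else \<alpha>F k)) L n"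
    by (rule dfrom_agree) (simp_all only: cax_child caT_child)
  then show ?thesis by (simp add: MM_def EE_def)
qed

lemma bellman_lower:
  assumes A: "Adv P \<noteq> {}" and tau: "set_pmf \<tau> \<subseteq> {y. realizable_ext P h x y}"
    and c: "\<And>k. c < ennreal (pmf \<tau> k) * VV P (h @ [(x, True, k)]) + ennreal (1 - pmf \<tau> k) * VV P (h @ [(x, False, k)])"
  shows "c \<le> VV P h"
proof -
  have "\<forall>k. \<exists>ab. fst ab \<in> Adv P \<and> snd ab \<in> Adv P \<and>
      c < ennreal (pmf \<tau> k) * JJ (h @ [(x, True, k)]) (fst (fst ab)) (snd (fst ab))
        + ennreal (1 - pmf \<tau> k) * JJ (h @ [(x, False, k)]) (fst (snd ab)) (snd (snd ab))"
  proof
    fix k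
    from sup_split[OF A c[of k, unfolded VV_def]]
    show "\<exists>ab. fst ab \<in> Adv P \<and> snd ab \<in> Adv P \<and>
      c < ennreal (pmf \<tau> k) * JJ (h @ [(x, True, k)]) (fst (fst ab)) (snd (fst ab))
        + ennreal (1 - pmf \<tau> k) * JJ (h @ [(x, False, k)]) (fst (snd ab)) (snd (snd ab))"
      by (metis fst_conv snd_conv)
  qed
  then obtain ch where ch: "\<And>k. fst (ch k) \<in> Adv P" "\<And>k. snd (ch k) \<in> Adv P"
     "\<And>k. c < ennreal (pmf \<tau> k) * JJ (h @ [(x, True, k)]) (fst (fst (ch k))) (snd (fst (ch k)))
        + ennreal (1 - pmf \<tau> k) * JJ (h @ [(x, False, k)]) (fst (snd (ch k))) (snd (snd (ch k)))"
    by metis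
  define \<alpha>T where "\<alpha>T k = fst (ch k)" for k
  define \<alpha>F where "\<alpha>F k = snd (ch k)" for k
  obtain \<alpha>0 where a0: "\<alpha>0 \<in> Adv P" using A by blast
  let ?ax = "cax h x \<alpha>T \<alpha>F \<alpha>0" and ?aT = "caT h x \<tau> \<alpha>T \<alpha>F \<alpha>0"
  have mem: "(?ax, ?aT) \<in> Adv P"
    by (rule comp_consistent) (use ch a0 tau in \<open>auto simp: \<alpha>T_def \<alpha>F_def\<close>)
  have "c \<le> JJ h ?ax ?aT"
    unfolding JJ_def
  proof (rule INF_greatest)
    fix L
    have ax_h: "?ax h = x" and aT_h: "?aT h = \<tau>" by (simp_all add: cax_def caT_def)
    have "(\<integral>\<^sup>+ k. c \<partial>measure_pmf (L h x \<tau>)) \<le>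
          (\<integral>\<^sup>+ k. \<integral>\<^sup>+ y. MM (h @ [(x, k = y, k)]) ?ax ?aT L \<partial>measure_pmf \<tau> \<partial>measure_pmf (L h x \<tau>))"
    proof (rule nn_integral_mono)
      fix k
      have e1: "(\<integral>\<^sup>+ y. MM (h @ [(x, k = y, k)]) ?ax ?aT L \<partial>measure_pmf \<tau>) =
            (\<integral>\<^sup>+ y. (if k = y then MM (h @ [(x, True, k)]) (fst (\<alpha>T k)) (snd (\<alpha>T k)) L
                     else MM (h @ [(x, False, k)]) (fst (\<alpha>F k)) (snd (\<alpha>F k)) L) \<partial>measure_pmf \<tau>)"
        by (intro nn_integral_cong) (simp add: MM_comp_child)
      have e2: "(\<integral>\<^sup>+ y. (if k = y then JJ (h @ [(x, True, k)]) (fst (\<alpha>T k)) (snd (\<alpha>T k))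
                     else JJ (h @ [(x, False, k)]) (fst (\<alpha>F k)) (snd (\<alpha>F k))) \<partial>measure_pmf \<tau>) \<le>
            (\<integral>\<^sup>+ y. (if k = y then MM (h @ [(x, True, k)]) (fst (\<alpha>T k)) (snd (\<alpha>T k)) L
                     else MM (h @ [(x, False, k)]) (fst (\<alpha>F k)) (snd (\<alpha>F k)) L) \<partial>measure_pmf \<tau>)"
        by (intro nn_integral_mono) (auto simp: JJ_def intro: INF_lower)
      have e3: "c < (\<integral>\<^sup>+ y. (if k = y then JJ (h @ [(x, True, k)]) (fst (\<alpha>T k)) (snd (\<alpha>T k))
                     else JJ (h @ [(x, False, k)]) (fst (\<alpha>F k)) (snd (\<alpha>F k))) \<partial>measure_pmf \<tau>)"
        unfolding int_if using ch(3)[of k] by (simp add: \<alpha>T_def \<alpha>F_def)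
      show "c \<le> (\<integral>\<^sup>+ y. MM (h @ [(x, k = y, k)]) ?ax ?aT L \<partial>measure_pmf \<tau>)"
        using e1 e2 e3 by simp
    qed
    also have "\<dots> = (\<integral>\<^sup>+ g. MM g ?ax ?aT L \<partial>measure_pmf (dstep ?ax ?aT L h))"
      by (simp only: dstep_def Let_def ax_h aT_h round_integral)
    also have "\<dots> \<le> MM h ?ax ?aT L" by (rule MM_ge)
    finally show "c \<le> MM h ?ax ?aT L" by simp
  qed
  also have "\<dots> \<le> VV P h" unfolding VV_def using mem
    by (metis (no_types, lifting) SUP_upper fst_conv snd_conv)
  finally show ?thesis .
qed

lemma finite_wpmf:
  fixes w :: "'a \<Rightarrow> real"
  assumes F: "finite F" "F \<noteq> {}" and w: "\<And>k. k \<in> F \<Longrightarrow> 0 < w k"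
  shows "\<exists>\<pi>. set_pmf \<pi> \<subseteq> F \<and> (\<forall>k\<in>F. pmf \<pi> k = w k / sum w F)"
proof -
  define W where "W = sum w F"
  have W: "0 < W" unfolding W_def using F w by (intro sum_pos) auto
  define f where "f k = (if k \<in> F then w k / W else 0)" for k
  have nn: "\<And>k. 0 \<le> f k" using w W by (auto simp: f_def less_imp_le)
  have "(\<integral>\<^sup>+ k. ennreal (f k) \<partial>count_space UNIV) = (\<Sum>k\<in>F. ennreal (f k))"
    by (rule nn_integral_count_space') (use F in \<open>auto simp: f_def\<close>)
  also have "\<dots> = ennreal (\<Sum>k\<in>F. f k)" using nn by simp
  also have "(\<Sum>k\<in>F. f k) = (\<Sum>k\<in>F. w k / W)" by (simp add: f_def)
  also have "\<dots> = 1" using W by (simp add: sum_divide_distrib[symmetric] W_def)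
  finally have int1: "(\<integral>\<^sup>+ k. ennreal (f k) \<partial>count_space UNIV) = 1" by simp
  define \<pi> where "\<pi> = embed_pmf f"
  have p: "pmf \<pi> k = f k" for k unfolding \<pi>_def by (rule pmf_embed_pmf[OF nn int1])
  have "set_pmf \<pi> \<subseteq> F" by (auto simp: set_pmf_eq p f_def)
  moreover have "\<forall>k\<in>F. pmf \<pi> k = w k / sum w F" by (simp add: p f_def W_def)
  ultimately show ?thesis by blast
qed

lemma int_finite_pmf:
  assumes "finite F" "set_pmf \<pi> \<subseteq> F"
  shows "(\<integral>\<^sup>+ k. g k \<partial>measure_pmf \<pi>) = (\<Sum>k\<in>F. g k * ennreal (pmf \<pi> k))"
  by (rule nn_integral_measure_pmf_support) (use assms in auto)

lemma pmf_outside: "set_pmf \<pi> \<subseteq> F \<Longrightarrow> k \<notin> F \<Longrightarrow> pmf \<pi> k = 0"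
  by (meson set_pmf_iff subsetD)

lemma conv_ennreal:
  assumes "0 \<le> p" "p \<le> 1" "0 \<le> a" "0 \<le> b"
  shows "ennreal p * ennreal a + ennreal (1 - p) * ennreal b = ennreal (p * a + (1 - p) * b)"
proof -
  have "ennreal (p * a + (1 - p) * b) = ennreal (p * a) + ennreal ((1 - p) * b)"
    using assms by (intro ennreal_plus) auto
  also have "\<dots> = ennreal p * ennreal a + ennreal (1 - p) * ennreal b"
    using assms by (simp add: ennreal_mult)
  finally show ?thesis by simp
qed

lemma enn_real_less: "x < ennreal c \<Longrightarrow> x = ennreal (enn2real x) \<and> enn2real x < c"
  by (cases x) (auto simp: ennreal_less_iff)

lemma enn_real_gt: "ennreal c < x \<Longrightarrow> x < \<infinity> \<Longrightarrow> 0 \<le> c \<Longrightarrow> x = ennreal (enn2real x) \<and> c < enn2real x"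
  by (cases x) (auto simp: ennreal_less_iff)

lemma mm_caseT:
  fixes a b :: "'y \<Rightarrow> ennreal" and c c' :: real
  assumes Y: "Y \<noteq> {}" and cc: "0 \<le> c'" "c' < c"
    and adv: "\<And>\<tau>. set_pmf \<tau> \<subseteq> Y \<Longrightarrow> \<exists>k. ennreal (pmf \<tau> k) * a k + ennreal (1 - pmf \<tau> k) * b k < ennreal c'"
    and bc: "\<And>k. ennreal c < b k"
  shows "\<exists>\<pi>. \<forall>y\<in>Y. (\<integral>\<^sup>+ k. (if k = y then a k else b k) \<partial>measure_pmf \<pi>) \<le> ennreal c"
proof -
  have cc': "ennreal c' < ennreal c" using cc by (simp add: ennreal_less_iff)
  have ay: "a y < ennreal c'" if y: "y \<in> Y" for y
  proof (rule ccontr)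
    assume "\<not> a y < ennreal c'"
    then have ge: "ennreal c' \<le> a y" by simp
    obtain k where k: "ennreal (pmf (return_pmf y) k) * a k + ennreal (1 - pmf (return_pmf y) k) * b k < ennreal c'"
      using adv[of "return_pmf y"] y by auto
    show False
    proof (cases "k = y")
      case True then show ?thesis using k ge by simp
    next
      case False then show ?thesis using k bc[of k] cc' by (simp add: pmf_return)
    qed
  qed
  define ar where "ar y = enn2real (a y)" for y
  have ar: "a y = ennreal (ar y)" "ar y < c'" "0 \<le> ar y" if "y \<in> Y" for y
    using enn_real_less[OF ay[OF that]] by (auto simp: ar_def)
  show ?thesis
  proof (cases "\<exists>y. Y = {y}")
    case True
    then obtain y where Yy: "Y = {y}" by blast
    show ?thesis
      by (rule exI[of _ "return_pmf y"]) (use ay Yy cc' in \<open>auto intro: less_imp_le\<close>)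
  next
    case False
    note notsing = False
    show ?thesis
    proof (cases "\<exists>y0\<in>Y. b y0 = \<infinity>")
      case True
      then obtain y0 where y0: "y0 \<in> Y" "b y0 = \<infinity>" by blast
      obtain y1 where y1: "y1 \<in> Y" "y1 \<noteq> y0" using notsing y0 Y by blast
      define \<delta> where "\<delta> = (if b y1 = \<infinity> then 1/2 else (enn2real (b y1) - c') / (enn2real (b y1) - ar y1))"
      have b1c: "ennreal c < b y1" by (rule bc)
      have r1: "c' < enn2real (b y1) \<and> b y1 = ennreal (enn2real (b y1))" if "b y1 \<noteq> \<infinity>"
        using enn_real_gt[OF b1c] that cc by (auto simp: less_top)
      have dl: "0 < \<delta> \<and> \<delta> < 1"
      proof (cases "b y1 = \<infinity>")
        case True then show ?thesis by (simp add: \<delta>_def)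
      next
        case False
        show ?thesis using r1[OF False] ar[OF y1(1)] False by (simp add: \<delta>_def field_simps)
      qed
      have "\<exists>\<tau>. set_pmf \<tau> \<subseteq> {y0, y1} \<and> pmf \<tau> y1 = \<delta> \<and> pmf \<tau> y0 = 1 - \<delta>"
      proof -
        have ex: "\<exists>\<tau>. set_pmf \<tau> \<subseteq> {y0, y1} \<and> (\<forall>k\<in>{y0, y1}. pmf \<tau> k = (\<lambda>k. if k = y1 then \<delta> else 1 - \<delta>) k / sum (\<lambda>k. if k = y1 then \<delta> else 1 - \<delta>) {y0, y1})"
          by (rule finite_wpmf) (use dl in auto)
        then obtain \<tau> where tau: "set_pmf \<tau> \<subseteq> {y0, y1}"
          "\<forall>k\<in>{y0, y1}. pmf \<tau> k = (\<lambda>k. if k = y1 then \<delta> else 1 - \<delta>) k / sum (\<lambda>k. if k = y1 then \<delta> else 1 - \<delta>) {y0, y1}"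
          by blast
        have "sum (\<lambda>k. if k = y1 then \<delta> else 1 - \<delta>) {y0, y1} = 1" using y1(2) by simp
        then show ?thesis using tau y1(2) by (intro exI[of _ \<tau>]) auto
      qed
      then obtain \<tau> where tau: "set_pmf \<tau> \<subseteq> {y0, y1}" and p1: "pmf \<tau> y1 = \<delta>" and p0: "pmf \<tau> y0 = 1 - \<delta>"
        by blast
      have "\<forall>k. ennreal c' \<le> ennreal (pmf \<tau> k) * a k + ennreal (1 - pmf \<tau> k) * b k"
      proof
        fix k
        show "ennreal c' \<le> ennreal (pmf \<tau> k) * a k + ennreal (1 - pmf \<tau> k) * b k"
        proof (cases "k = y0")
          case True
          then show ?thesis using p0 y0 dl by (simp add: ennreal_mult_top)
        next
          case False
          note k0 = False
          show ?thesis
          proof (cases "k = y1")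
            case True
            show ?thesis
            proof (cases "b y1 = \<infinity>")
              case True
              then show ?thesis using \<open>k = y1\<close> p1 dl by (simp add: ennreal_mult_top)
            next
              case False
              have "ennreal (pmf \<tau> k) * a k + ennreal (1 - pmf \<tau> k) * b k =
                    ennreal \<delta> * ennreal (ar y1) + ennreal (1 - \<delta>) * ennreal (enn2real (b y1))"
                using \<open>k = y1\<close> p1 ar[OF y1(1)] r1[OF False] by simp
              also have "\<dots> = ennreal (\<delta> * ar y1 + (1 - \<delta>) * enn2real (b y1))"
                using dl ar[OF y1(1)] by (intro conv_ennreal) auto
              also have "\<delta> * ar y1 + (1 - \<delta>) * enn2real (b y1) = c'"
              proof -
                define B where "B = enn2real (b y1)"
                have pos: "B - ar y1 \<noteq> 0" using r1[OF False] ar[OF y1(1)] by (simp add: B_def)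
                have e: "\<delta> * (B - ar y1) = B - c'" using False pos by (simp add: \<delta>_def B_def)
                have "\<delta> * ar y1 + (1 - \<delta>) * B = B - \<delta> * (B - ar y1)" by (simp add: algebra_simps)
                then show ?thesis using e by (simp add: B_def)
              qed
              finally show ?thesis by simp
            qed
          next
            case False
            then have "pmf \<tau> k = 0" using k0 tau(1) by (intro pmf_outside) auto
            then show ?thesis using bc[of k] cc' by simp
          qed
        qed
      qed
      moreover have "set_pmf \<tau> \<subseteq> Y" using tau(1) y0 y1 by auto
      ultimately show ?thesis using adv[of \<tau>] by (meson not_le)
    next
      case False
      then have bfin: "\<And>y. y \<in> Y \<Longrightarrow> b y \<noteq> \<infinity>" by simp
      define br where "br y = enn2real (b y)" for y
      have c0: "0 \<le> c" using cc by simp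
      have br: "b y = ennreal (br y)" "c < br y" if "y \<in> Y" for y
        using enn_real_gt[OF bc[of y] _ c0] bfin[OF that] by (auto simp: br_def less_top)
      define u where "u y = (br y - c') / (br y - ar y)" for y
      define \<kappa> where "\<kappa> = 1 - c' / c"
      have \<kappa>: "0 < \<kappa>" using cc by (simp add: \<kappa>_def field_simps)
      have ugt: "\<kappa> \<le> u y" "0 < u y" and ueq: "u y * (br y - ar y) = br y - c'" if y: "y \<in> Y" for y
      proof -
        have h1: "0 < br y - ar y" "br y - ar y \<le> br y" "0 < br y - c'"
          using br[OF y] ar[OF y] cc by auto
        have "(br y - c') / br y \<le> u y" unfolding u_def
          by (rule divide_left_mono) (use h1 in auto)
        moreover have "(br y - c') / br y = 1 - c' / br y" using h1 cc br[OF y] by (simp add: field_simps)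
        moreover have "c' / br y \<le> c' / c" using cc br[OF y] by (intro divide_left_mono) auto
        ultimately show "\<kappa> \<le> u y" by (simp add: \<kappa>_def)
        show "0 < u y" using h1 by (simp add: u_def)
        show "u y * (br y - ar y) = br y - c'" using h1 by (simp add: u_def)
      qed
      have C1: "sum u F < 1" if F: "finite F" "F \<subseteq> Y" "F \<noteq> {}" for F
      proof (rule ccontr)
        assume "\<not> sum u F < 1"
        then have U: "1 \<le> sum u F" by simp
        have ex: "\<exists>\<tau>. set_pmf \<tau> \<subseteq> F \<and> (\<forall>k\<in>F. pmf \<tau> k = u k / sum u F)"
          by (rule finite_wpmf) (use F ugt in auto)
        then obtain \<tau> where tau: "set_pmf \<tau> \<subseteq> F" "\<forall>k\<in>F. pmf \<tau> k = u k / sum u F" by blast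
        have "ennreal c' \<le> ennreal (pmf \<tau> k) * a k + ennreal (1 - pmf \<tau> k) * b k" for k
        proof (cases "k \<in> F")
          case True
          then have kY: "k \<in> Y" using F by auto
          define p where "p = pmf \<tau> k"
          have p: "0 \<le> p" "p \<le> 1" by (simp_all add: p_def pmf_le_1)
          have pu: "p \<le> u k"
          proof -
            have "p = u k / sum u F" using tau(2) True by (simp add: p_def)
            also have "\<dots> \<le> u k / 1" by (rule divide_left_mono) (use U ugt[OF kY] in auto)
            finally show ?thesis by simp
          qed
          have "ennreal (pmf \<tau> k) * a k + ennreal (1 - pmf \<tau> k) * b k = ennreal (p * ar k + (1 - p) * br k)"
          proof -
            have "0 \<le> br k" using br[OF kY] c0 by linarith
            then show ?thesis using ar[OF kY] br[OF kY] p conv_ennreal[of p "ar k" "br k"] by (simp add: p_def[symmetric])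
          qed
          moreover have "c' \<le> p * ar k + (1 - p) * br k"
          proof -
            have "p * (br k - ar k) \<le> u k * (br k - ar k)"
              using pu ar[OF kY] br[OF kY] cc by (intro mult_right_mono) auto
            then have "p * (br k - ar k) \<le> br k - c'" using ueq[OF kY] by simp
            moreover have "p * ar k + (1 - p) * br k = br k - p * (br k - ar k)" by (simp add: algebra_simps)
            ultimately show ?thesis by simp
          qed
          ultimately show ?thesis using cc by simp
        next
          case False
          then have "pmf \<tau> k = 0" using tau(1) by (intro pmf_outside)
          then show ?thesis using bc[of k] cc' by simp
        qed
        moreover have "set_pmf \<tau> \<subseteq> Y" using tau(1) F by auto
        ultimately show False using adv[of \<tau>] by (meson not_le)
      qed
      have Yfin: "finite Y"
      proof (rule ccontr)
        assume inf: "infinite Y"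
        obtain N :: nat where N: "1 / \<kappa> < real N" using reals_Archimedean2 by blast
        obtain F where F: "finite F" "F \<subseteq> Y" "card F = N" using infinite_arbitrarily_large[OF inf] by blast
        have N1: "1 \<le> real N * \<kappa>" using N \<kappa> by (simp add: field_simps)
        then have "N \<noteq> 0" by (metis mult_zero_left not_one_le_zero of_nat_0)
        then have Fne: "F \<noteq> {}" using F by auto
        have "real N * \<kappa> = sum (\<lambda>_. \<kappa>) F" using F by simp
        also have "\<dots> \<le> sum u F" using F ugt by (intro sum_mono) auto
        finally show False using C1[OF F(1,2) Fne] N1 by simp
      qed
      have sumY: "sum u Y < 1" using C1[OF Yfin _ Y] by simp
      define w where "w y = 1 / (br y - ar y)" for y
      have wpos: "0 < w y" if "y \<in> Y" for y using br[OF that] ar[OF that] cc by (simp add: w_def)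
      define W where "W = sum w Y"
      have Wpos: "0 < W" unfolding W_def using Yfin Y wpos by (intro sum_pos) auto
      have ex: "\<exists>\<pi>. set_pmf \<pi> \<subseteq> Y \<and> (\<forall>k\<in>Y. pmf \<pi> k = w k / sum w Y)"
        by (rule finite_wpmf) (use Yfin Y wpos in auto)
      then obtain \<pi> where pi: "set_pmf \<pi> \<subseteq> Y" "\<forall>k\<in>Y. pmf \<pi> k = w k / W" unfolding W_def by blast
      show ?thesis
      proof (intro exI[of _ \<pi>] ballI)
        fix y assume y: "y \<in> Y"
        define g where "g k = (if k = y then ar k else br k)" for k
        have "(\<integral>\<^sup>+ k. (if k = y then a k else b k) \<partial>measure_pmf \<pi>) =
              (\<Sum>k\<in>Y. (if k = y then a k else b k) * ennreal (pmf \<pi> k))"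
          by (rule int_finite_pmf[OF Yfin pi(1)])
        also have "\<dots> = (\<Sum>k\<in>Y. ennreal (g k * (w k / W)))"
        proof (rule sum.cong[OF refl])
          fix k assume k: "k \<in> Y"
          have g0: "0 \<le> g k" using ar[OF k] br[OF k] cc by (auto simp: g_def)
          have w0: "0 \<le> w k / W" using wpos[OF k] Wpos by simp
          have gk: "(if k = y then a k else b k) = ennreal (g k)" using ar[OF k] br[OF k] by (auto simp: g_def)
          have pk: "pmf \<pi> k = w k / W" using pi(2) k by simp
          show "(if k = y then a k else b k) * ennreal (pmf \<pi> k) = ennreal (g k * (w k / W))"
            unfolding gk pk using ennreal_mult[OF g0 w0] by simp
        qed
        also have "\<dots> = ennreal (\<Sum>k\<in>Y. g k * (w k / W))"
        proof (rule sum_ennreal)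
          fix k assume k: "k \<in> Y"
          show "0 \<le> g k * (w k / W)" using ar[OF k] br[OF k] cc wpos[OF k] Wpos by (auto simp: g_def)
        qed
        also have "ennreal (\<Sum>k\<in>Y. g k * (w k / W)) \<le> ennreal c"
        proof (rule ennreal_leI)
          have s1: "(\<Sum>k\<in>Y. g k * w k) = (\<Sum>k\<in>Y. br k * w k) - 1"
          proof -
            have "(\<Sum>k\<in>Y. g k * w k) = (\<Sum>k\<in>Y. br k * w k + (if k = y then (ar y - br y) * w y else 0))"
              by (rule sum.cong) (auto simp: g_def algebra_simps)
            also have "\<dots> = (\<Sum>k\<in>Y. br k * w k) + (ar y - br y) * w y"
              using Yfin y by (simp add: sum.distrib)
            also have "(ar y - br y) * w y = -1" using br[OF y] ar[OF y] cc by (simp add: w_def field_simps)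
            finally show ?thesis by simp
          qed
          have s2: "sum u Y = (\<Sum>k\<in>Y. br k * w k) - c' * W"
          proof -
            have "sum u Y = (\<Sum>k\<in>Y. br k * w k - c' * w k)"
              by (rule sum.cong) (auto simp: u_def w_def diff_divide_distrib)
            also have "\<dots> = (\<Sum>k\<in>Y. br k * w k) - c' * W"
              by (simp add: sum_subtractf W_def sum_distrib_left)
            finally show ?thesis .
          qed
          have "(\<Sum>k\<in>Y. g k * (w k / W)) = (\<Sum>k\<in>Y. g k * w k) / W"
            by (simp add: sum_divide_distrib)
          also have "\<dots> \<le> c'" using s1 s2 sumY Wpos by (simp add: divide_le_eq)
          finally show "(\<Sum>k\<in>Y. g k * (w k / W)) \<le> c" using cc by simp
        qed
        finally show "(\<integral>\<^sup>+ k. (if k = y then a k else b k) \<partial>measure_pmf \<pi>) \<le> ennreal c" .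
      qed
    qed
  qed
qed

lemma count_space_approx:
  fixes f :: "'a::countable \<Rightarrow> ennreal"
  assumes x: "x < (\<integral>\<^sup>+ k. f k \<partial>count_space UNIV)"
  shows "\<exists>Q. finite Q \<and> x < sum f Q"
proof -
  define F :: "nat \<Rightarrow> 'a set" where "F n = to_nat -` {..<n}" for n
  have finF: "finite (F n)" for n unfolding F_def by (rule finite_vimageI) (auto simp: inj_to_nat)
  define g where "g n k = f k * indicator (F n) k" for n k
  have inc: "incseq g"
    unfolding g_def F_def by (intro incseq_SucI le_funI) (auto split: split_indicator)
  have sup: "(SUP n. g n k) = f k" for k
  proof (rule antisym)
    show "(SUP n. g n k) \<le> f k" by (intro SUP_least) (auto simp: g_def split: split_indicator)
    have "g (Suc (to_nat k)) k = f k" by (simp add: g_def F_def)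
    then show "f k \<le> (SUP n. g n k)" by (metis SUP_upper UNIV_I)
  qed
  have "(\<integral>\<^sup>+ k. f k \<partial>count_space UNIV) = (\<integral>\<^sup>+ k. (SUP n. g n k) \<partial>count_space UNIV)"
    by (simp add: sup)
  also have "\<dots> = (SUP n. \<integral>\<^sup>+ k. g n k \<partial>count_space UNIV)"
    by (rule nn_integral_monotone_convergence_SUP[OF inc]) simp
  also have "(\<lambda>n. \<integral>\<^sup>+ k. g n k \<partial>count_space UNIV) = (\<lambda>n. sum f (F n))"
  proof
    fix n
    show "(\<integral>\<^sup>+ k. g n k \<partial>count_space UNIV) = sum f (F n)"
      unfolding g_def by (subst nn_integral_count_space'[OF finF]) (auto split: split_indicator)
  qed
  finally have "x < (SUP n. sum f (F n))" using x by simp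
  then obtain n where "x < sum f (F n)" by (auto simp: less_SUP_iff)
  then show ?thesis using finF by blast
qed

lemma full_support_pmf:
  fixes S :: "'a::countable set"
  assumes "S \<noteq> {}"
  shows "\<exists>\<nu>. set_pmf \<nu> = S"
proof -
  have "countable S" by simp
  define \<nu> where "\<nu> = map_pmf (from_nat_into S) (geometric_pmf (1/2))"
  have "set_pmf \<nu> = from_nat_into S ` UNIV"
    by (simp add: \<nu>_def set_pmf_geometric)
  also have "\<dots> = S" using assms \<open>countable S\<close> by simp
  finally show ?thesis by blast
qed

lemma mm_caseS:
  fixes a b :: "'y::countable \<Rightarrow> ennreal" and c c' :: real
  assumes Y: "Y \<noteq> {}" and cc: "0 \<le> c'" "c' < c"
    and adv: "\<And>\<tau>. set_pmf \<tau> \<subseteq> Y \<Longrightarrow> \<exists>k. ennreal (pmf \<tau> k) * a k + ennreal (1 - pmf \<tau> k) * b k < ennreal c'"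
    and np: "\<And>k. b k \<le> ennreal c \<Longrightarrow> k \<in> Y \<and> ennreal c < a k"
    and s0: "b s0 \<le> ennreal c"
  shows "\<exists>\<pi>. \<forall>y\<in>Y. (\<integral>\<^sup>+ k. (if k = y then a k else b k) \<partial>measure_pmf \<pi>) \<le> ennreal c"
proof -
  have c0: "0 \<le> c" using cc by simp
  define S where "S = {k. b k \<le> ennreal c}"
  define br where "br k = enn2real (b k)" for k
  define ar where "ar k = enn2real (a k)" for k
  have brS: "b k = ennreal (br k)" "br k \<le> c" "0 \<le> br k" if "k \<in> S" for k
  proof -
    have "b k \<le> ennreal c" using that by (simp add: S_def)
    then show "b k = ennreal (br k)" "0 \<le> br k"
      using c0 by (cases "b k") (auto simp: br_def top_unique)
    show "br k \<le> c" unfolding br_def by (rule enn2real_leI[OF c0 \<open>b k \<le> ennreal c\<close>])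
  qed
  have arS: "a k = ennreal (ar k)" "c < ar k" if "k \<in> S" "a k \<noteq> \<infinity>" for k
  proof -
    have "ennreal c < a k" using np that by (simp add: S_def)
    then show "a k = ennreal (ar k)" "c < ar k"
      using enn_real_gt[of c "a k"] that(2) c0 by (auto simp: ar_def less_top)
  qed
  define G where "G = {k. k \<in> S \<and> a k \<noteq> \<infinity>}"
  define l where "l k = (if k \<in> G then (c - br k) / (ar k - br k) else 0)" for k
  have l0: "0 \<le> l k" for k
  proof (cases "k \<in> G")
    case True
    then have "k \<in> S" "a k \<noteq> \<infinity>" by (auto simp: G_def)
    then have "br k \<le> c" "c < ar k" using brS arS by auto
    then show ?thesis using True by (simp add: l_def)
  qed (simp add: l_def)
  define LL where "LL = (\<integral>\<^sup>+ k. ennreal (l k) \<partial>count_space UNIV)"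
  show ?thesis
  proof (cases "1 < LL")
    case True
    obtain Q where Q: "finite Q" "1 < sum (\<lambda>k. ennreal (l k)) Q"
      using count_space_approx[of 1 "\<lambda>k. ennreal (l k)"] True by (auto simp: LL_def)
    define Q' where "Q' = Q \<inter> G"
    have Q'f: "finite Q'" using Q by (simp add: Q'_def)
    have "sum (\<lambda>k. ennreal (l k)) Q = ennreal (sum l Q)" using l0 by simp
    then have sQ: "1 < sum l Q" using Q(2) by simp
    have "sum l Q = sum l Q'"
      unfolding Q'_def by (rule sum.mono_neutral_right) (use Q in \<open>auto simp: l_def\<close>)
    then have sQ': "1 < sum l Q'" using sQ by simp
    then have Q'ne: "Q' \<noteq> {}" by auto
    have Q'G: "k \<in> S" "a k \<noteq> \<infinity>" if "k \<in> Q'" for k using that by (auto simp: Q'_def G_def)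
    define w where "w k = 1 / (ar k - br k)" for k
    have wpos: "0 < w k" if "k \<in> Q'" for k
      using brS[OF Q'G(1)[OF that]] arS[OF Q'G[OF that]] by (simp add: w_def)
    define W where "W = sum w Q'"
    have Wpos: "0 < W" unfolding W_def using Q'f Q'ne wpos by (intro sum_pos) auto
    have ex: "\<exists>\<pi>. set_pmf \<pi> \<subseteq> Q' \<and> (\<forall>k\<in>Q'. pmf \<pi> k = w k / sum w Q')"
      by (rule finite_wpmf) (use Q'f Q'ne wpos in auto)
    then obtain \<pi> where pi: "set_pmf \<pi> \<subseteq> Q'" "\<forall>k\<in>Q'. pmf \<pi> k = w k / W" unfolding W_def by blast
    show ?thesis
    proof (intro exI[of _ \<pi>] ballI)
      fix y assume y: "y \<in> Y"
      define g where "g k = (if k = y then ar k else br k)" for k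
      have "(\<integral>\<^sup>+ k. (if k = y then a k else b k) \<partial>measure_pmf \<pi>) =
            (\<Sum>k\<in>Q'. (if k = y then a k else b k) * ennreal (pmf \<pi> k))"
        by (rule int_finite_pmf[OF Q'f pi(1)])
      also have "\<dots> = (\<Sum>k\<in>Q'. ennreal (g k * (w k / W)))"
      proof (rule sum.cong[OF refl])
        fix k assume k: "k \<in> Q'"
        note B = brS[OF Q'G(1)[OF k]] and A = arS[OF Q'G[OF k]]
        have g0: "0 \<le> g k" using A B by (auto simp: g_def)
        have w0: "0 \<le> w k / W" using wpos[OF k] Wpos by simp
        have gk: "(if k = y then a k else b k) = ennreal (g k)" using A B by (auto simp: g_def)
        have pk: "pmf \<pi> k = w k / W" using pi(2) k by simp
        show "(if k = y then a k else b k) * ennreal (pmf \<pi> k) = ennreal (g k * (w k / W))"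
          unfolding gk pk using ennreal_mult[OF g0 w0] by simp
      qed
      also have "\<dots> = ennreal (\<Sum>k\<in>Q'. g k * (w k / W))"
      proof (rule sum_ennreal)
        fix k assume k: "k \<in> Q'"
        note B = brS[OF Q'G(1)[OF k]] and A = arS[OF Q'G[OF k]]
        show "0 \<le> g k * (w k / W)" using A B wpos[OF k] Wpos by (auto simp: g_def)
      qed
      also have "ennreal (\<Sum>k\<in>Q'. g k * (w k / W)) \<le> ennreal c"
      proof (rule ennreal_leI)
        have s1: "(\<Sum>k\<in>Q'. g k * w k) \<le> (\<Sum>k\<in>Q'. br k * w k) + 1"
        proof -
          have "(\<Sum>k\<in>Q'. g k * w k) = (\<Sum>k\<in>Q'. br k * w k + (if k = y then (ar k - br k) * w k else 0))"
            by (rule sum.cong) (auto simp: g_def algebra_simps)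
          also have "\<dots> = (\<Sum>k\<in>Q'. br k * w k) + (\<Sum>k\<in>Q'. (if k = y then (ar k - br k) * w k else 0))"
            by (simp add: sum.distrib)
          also have "(\<Sum>k\<in>Q'. (if k = y then (ar k - br k) * w k else 0)) \<le> 1"
          proof (cases "y \<in> Q'")
            case True
            have "(\<Sum>k\<in>Q'. (if k = y then (ar k - br k) * w k else 0)) = (ar y - br y) * w y"
              using Q'f True by (simp add: sum.delta')
            also have "\<dots> = 1"
              using brS[OF Q'G(1)[OF True]] arS[OF Q'G[OF True]] by (simp add: w_def)
            finally show ?thesis by simp
          next
            case False
            then show ?thesis using Q'f by (simp add: sum.delta')
          qed
          finally show ?thesis by simp
        qed
        have s2: "sum l Q' = c * W - (\<Sum>k\<in>Q'. br k * w k)"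
        proof -
          have "sum l Q' = (\<Sum>k\<in>Q'. c * w k - br k * w k)"
            by (rule sum.cong) (auto simp: l_def w_def Q'_def diff_divide_distrib)
          also have "\<dots> = c * W - (\<Sum>k\<in>Q'. br k * w k)"
            by (simp add: sum_subtractf W_def sum_distrib_left)
          finally show ?thesis .
        qed
        have "(\<Sum>k\<in>Q'. g k * (w k / W)) = (\<Sum>k\<in>Q'. g k * w k) / W"
          by (simp add: sum_divide_distrib)
        also have "\<dots> \<le> c" using s1 s2 sQ' Wpos by (simp add: divide_le_eq)
        finally show "(\<Sum>k\<in>Q'. g k * (w k / W)) \<le> c" .
      qed
      finally show "(\<integral>\<^sup>+ k. (if k = y then a k else b k) \<partial>measure_pmf \<pi>) \<le> ennreal c" .
    qed
  next
    case False
    then have LL1: "LL \<le> 1" by simp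
    define LLr where "LLr = enn2real LL"
    have LLr12: "LL = ennreal LLr" "0 \<le> LLr"
      using LL1 by (cases LL) (auto simp: LLr_def top_unique)
    have "LLr \<le> 1" unfolding LLr_def using enn2real_leI[of 1 LL] LL1 by simp
    note LLr = LLr12 this
    define \<theta> where "\<theta> = c' / c"
    have th: "0 \<le> \<theta>" "\<theta> < 1" "\<theta> * c = c'" using cc by (auto simp: \<theta>_def field_simps)
    have thL: "0 < 1 - \<theta> * LLr"
    proof -
      have "\<theta> * LLr \<le> \<theta>" using th LLr by (simp add: mult_left_le)
      then show ?thesis using th by simp
    qed
    have Sne: "S \<noteq> {}" using s0 by (auto simp: S_def)
    obtain \<nu> where nu: "set_pmf \<nu> = S" using full_support_pmf[OF Sne] by blast
    define f where "f k = \<theta> * l k + (1 - \<theta> * LLr) * pmf \<nu> k" for k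
    have f0: "0 \<le> f k" for k using th l0 thL by (simp add: f_def)
    have "(\<integral>\<^sup>+ k. ennreal (f k) \<partial>count_space UNIV) =
          (\<integral>\<^sup>+ k. ennreal \<theta> * ennreal (l k) + ennreal (1 - \<theta> * LLr) * ennreal (pmf \<nu> k) \<partial>count_space UNIV)"
      by (intro nn_integral_cong) (use th l0 thL in \<open>simp add: f_def ennreal_mult\<close>)
    also have "\<dots> = ennreal \<theta> * LL + ennreal (1 - \<theta> * LLr) * (\<integral>\<^sup>+ k. ennreal (pmf \<nu> k) \<partial>count_space UNIV)"
      by (simp add: nn_integral_add nn_integral_cmult LL_def)
    also have "(\<integral>\<^sup>+ k. ennreal (pmf \<nu> k) \<partial>count_space UNIV) = 1"
      by (simp add: nn_integral_pmf)
    also have "ennreal \<theta> * LL + ennreal (1 - \<theta> * LLr) * 1 = ennreal (\<theta> * LLr + (1 - \<theta> * LLr))"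
    proof -
      have m: "ennreal \<theta> * LL = ennreal (\<theta> * LLr)" using th LLr by (simp add: ennreal_mult)
      have "ennreal (\<theta> * LLr + (1 - \<theta> * LLr)) = ennreal (\<theta> * LLr) + ennreal (1 - \<theta> * LLr)"
        using th LLr thL by (intro ennreal_plus) auto
      then show ?thesis using m by simp
    qed
    finally have int1: "(\<integral>\<^sup>+ k. ennreal (f k) \<partial>count_space UNIV) = 1" by simp
    define \<tau> where "\<tau> = embed_pmf f"
    have pt: "pmf \<tau> k = f k" for k unfolding \<tau>_def by (rule pmf_embed_pmf[OF f0 int1])
    have fS: "f k = 0" if "k \<notin> S" for k
    proof -
      have "l k = 0" using that by (simp add: l_def G_def)
      moreover have "pmf \<nu> k = 0" using that nu by (metis set_pmf_iff)
      ultimately show ?thesis by (simp add: f_def)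
    qed
    have tS: "set_pmf \<tau> \<subseteq> Y"
    proof
      fix k assume "k \<in> set_pmf \<tau>"
      then have "f k \<noteq> 0" by (simp add: set_pmf_iff pt)
      then have "k \<in> S" using fS by blast
      then show "k \<in> Y" using np by (simp add: S_def)
    qed
    have "ennreal c' \<le> ennreal (pmf \<tau> k) * a k + ennreal (1 - pmf \<tau> k) * b k" for k
    proof (cases "k \<in> S")
      case False
      then have "pmf \<tau> k = 0" by (simp add: pt fS)
      moreover have "ennreal c < b k" using False by (simp add: S_def)
      moreover have "ennreal c' \<le> ennreal c" using cc by simp
      ultimately show ?thesis by simp
    next
      case True
      note kS = True
      show ?thesis
      proof (cases "a k = \<infinity>")
        case True
        have "0 < pmf \<nu> k" using kS nu by (simp add: pmf_positive)
        then have "0 < f k" using thL th l0[of k] by (simp add: f_def add_nonneg_pos)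
        then show ?thesis using True by (simp add: pt)
      next
        case False
        note A = arS[OF kS False] and B = brS[OF kS]
        define p where "p = pmf \<tau> k"
        have p: "0 \<le> p" "p \<le> 1" by (simp_all add: p_def pmf_le_1)
        have pl: "\<theta> * l k \<le> p"
          using thL f0 by (simp add: p_def pt f_def)
        have "ennreal (pmf \<tau> k) * a k + ennreal (1 - pmf \<tau> k) * b k = ennreal (p * ar k + (1 - p) * br k)"
          using A B p conv_ennreal[of p "ar k" "br k"] c0 by (simp add: p_def[symmetric])
        moreover have "c' \<le> p * ar k + (1 - p) * br k"
        proof -
          have lk: "l k * (ar k - br k) = c - br k"
            using A B kS False by (simp add: l_def G_def)
          have "\<theta> * l k * (ar k - br k) \<le> p * (ar k - br k)"
            using pl A B by (intro mult_right_mono) auto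
          then have "\<theta> * (c - br k) \<le> p * (ar k - br k)" using lk by (simp add: mult.assoc)
          moreover have "p * ar k + (1 - p) * br k = br k + p * (ar k - br k)" by (simp add: algebra_simps)
          moreover have "\<theta> * (c - br k) = c' - \<theta> * br k" using th by (simp add: algebra_simps)
          moreover have "\<theta> * br k \<le> br k" using th B by (simp add: mult_left_le_one_le)
          ultimately show ?thesis by linarith
        qed
        ultimately show ?thesis using cc by simp
      qed
    qed
    then show ?thesis using adv[OF tS] by (meson not_le)
  qed
qed

lemma minimax1:
  fixes a b :: "'y::countable \<Rightarrow> ennreal" and c c' :: real
  assumes Y: "Y \<noteq> {}" and cc: "0 \<le> c'" "c' < c"
    and adv: "\<And>\<tau>. set_pmf \<tau> \<subseteq> Y \<Longrightarrow> \<exists>k. ennreal (pmf \<tau> k) * a k + ennreal (1 - pmf \<tau> k) * b k < ennreal c'"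
  shows "\<exists>\<pi>. \<forall>y\<in>Y. (\<integral>\<^sup>+ k. (if k = y then a k else b k) \<partial>measure_pmf \<pi>) \<le> ennreal c"
proof (cases "\<exists>k. b k \<le> ennreal c \<and> (k \<in> Y \<longrightarrow> a k \<le> ennreal c)")
  case True
  then obtain k where k: "b k \<le> ennreal c" "k \<in> Y \<longrightarrow> a k \<le> ennreal c" by blast
  show ?thesis
    by (rule exI[of _ "return_pmf k"]) (use k in auto)
next
  case False
  have np: "k \<in> Y \<and> ennreal c < a k" if bk: "b k \<le> ennreal c" for k
  proof -
    from False bk have "k \<in> Y" "\<not> a k \<le> ennreal c" by auto
    then show ?thesis by (simp add: not_le)
  qed
  show ?thesis
  proof (cases "\<exists>s0. b s0 \<le> ennreal c")
    case True
    then obtain s0 where s0: "b s0 \<le> ennreal c" by blast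
    show ?thesis by (rule mm_caseS[OF Y cc adv np s0]) auto
  next
    case False
    then have bc: "\<And>k. ennreal c < b k" by (auto simp: not_le)
    show ?thesis by (rule mm_caseT[OF Y cc adv bc])
  qed
qed

lemma bellman_upper:
  fixes P :: "('x, 'y::countable) pattern set"
  assumes A: "Adv P \<noteq> {}" and fin: "VV P h < \<infinity>" and Y: "{y. realizable_ext P h x y} \<noteq> {}"
    and e: "0 < e"
  shows "\<exists>\<pi>. \<forall>y\<in>{y. realizable_ext P h x y}.
     (\<integral>\<^sup>+ k. VV P (h @ [(x, k = y, k)]) \<partial>measure_pmf \<pi>) \<le> VV P h + ennreal e"
proof -
  define v where "v = enn2real (VV P h)"
  have v: "VV P h = ennreal v" "0 \<le> v" using fin by (auto simp: v_def less_top)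
  define a where "a k = VV P (h @ [(x, True, k)])" for k
  define b where "b k = VV P (h @ [(x, False, k)])" for k
  have "\<exists>\<pi>. \<forall>y\<in>{y. realizable_ext P h x y}. (\<integral>\<^sup>+ k. (if k = y then a k else b k) \<partial>measure_pmf \<pi>) \<le> ennreal (v + e)"
  proof (rule minimax1[OF Y, of "v + e/2"])
    show "0 \<le> v + e / 2" using v e by simp
    show "v + e / 2 < v + e" using e by simp
    fix \<tau> assume tau: "set_pmf \<tau> \<subseteq> {y. realizable_ext P h x y}"
    show "\<exists>k. ennreal (pmf \<tau> k) * a k + ennreal (1 - pmf \<tau> k) * b k < ennreal (v + e / 2)"
    proof (rule ccontr)
      assume "\<not> ?thesis"
      then have ge: "\<And>k. ennreal (v + e / 4) < ennreal (pmf \<tau> k) * a k + ennreal (1 - pmf \<tau> k) * b k"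
        using e v by (auto simp: not_less intro: less_le_trans[of _ "ennreal (v + e/2)"] simp: ennreal_less_iff)
      have "ennreal (v + e / 4) \<le> VV P h"
        by (rule bellman_lower[OF A tau]) (use ge in \<open>simp add: a_def b_def\<close>)
      then show False using v e by (simp add: ennreal_le_iff)
    qed
  qed
  then obtain \<pi> where pi: "\<forall>y\<in>{y. realizable_ext P h x y}. (\<integral>\<^sup>+ k. (if k = y then a k else b k) \<partial>measure_pmf \<pi>) \<le> ennreal (v + e)"
    by blast
  have eq: "(\<integral>\<^sup>+ k. VV P (h @ [(x, k = y, k)]) \<partial>measure_pmf \<pi>) = (\<integral>\<^sup>+ k. (if k = y then a k else b k) \<partial>measure_pmf \<pi>)" for y
    by (intro nn_integral_cong) (simp add: a_def b_def)
  have "ennreal (v + e) = VV P h + ennreal e" using v e by (simp add: ennreal_plus)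
  then show ?thesis using pi eq by (intro exI[of _ \<pi>]) auto
qed

lemma realizable_Nil: "pattern_class P \<Longrightarrow> realizable P []"
proof -
  assume pc: "pattern_class P"
  then obtain s where s: "s \<in> P" by (auto simp: pattern_class_def)
  have "subseq [] s" by simp
  then have "[] \<in> P" using pc s by (auto simp: pattern_class_def)
  then show ?thesis by (auto simp: realizable_def agrees_def intro!: exI[of _ "[]"])
qed

lemma realizable_ext_snoc:
  assumes "realizable_ext P h x y"
  shows "realizable P (h @ [(x, k = y, k)])"
proof -
  obtain ys where ys: "agrees h ys" "zip (map fst h) ys @ [(x, y)] \<in> P"
    using assms by (auto simp: realizable_ext_def)
  have len: "length ys = length h" using ys(1) by (simp add: agrees_def)
  have "agrees (h @ [(x, k = y, k)]) (ys @ [y])"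
    unfolding agrees_def
  proof (intro conjI allI impI)
    show "length (ys @ [y]) = length (h @ [(x, k = y, k)])" using len by simp
    fix i assume i: "i < length (h @ [(x, k = y, k)])"
    show "fst (snd ((h @ [(x, k = y, k)]) ! i)) = ((ys @ [y]) ! i = snd (snd ((h @ [(x, k = y, k)]) ! i)))"
    proof (cases "i < length h")
      case True
      then show ?thesis using ys(1) len by (simp add: agrees_def nth_append)
    next
      case False
      then have "i = length h" using i by simp
      then show ?thesis using len by (auto simp: nth_append)
    qed
  qed
  moreover have "zip (map fst (h @ [(x, k = y, k)])) (ys @ [y]) = zip (map fst h) ys @ [(x, y)]"
    using len by simp
  ultimately show ?thesis using ys(2) unfolding realizable_def by metis
qed

lemma primal_support:
  assumes pc: "pattern_class P" and cons: "primal_consistent P ax aT"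
  shows "g \<in> set_pmf (primal_hist L ax aT n) \<Longrightarrow> realizable P g \<and> length g = n"
proof (induction n arbitrary: g)
  case 0 then show ?case using realizable_Nil[OF pc] by simp
next
  case (Suc n)
  then obtain g0 where g0: "g0 \<in> set_pmf (primal_hist L ax aT n)"
    and g: "g \<in> set_pmf (round_step g0 (ax g0) (L g0 (ax g0)) (aT g0 (ax g0) (L g0 (ax g0))))"
    by (auto simp: Let_def)
  from Suc.IH[OF g0] have r: "realizable P g0" "length g0 = n" by auto
  from g obtain k y where ky: "y \<in> set_pmf (aT g0 (ax g0) (L g0 (ax g0)))" "g = g0 @ [(ax g0, k = y, k)]"
    by (auto simp: round_step_def)
  have "realizable_ext P g0 (ax g0) y" using cons r(1) ky(1) by (auto simp: primal_consistent_def)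
  then show ?case using realizable_ext_snoc ky(2) r(2) by auto
qed

lemma finite_at_support:
  assumes "(\<integral>\<^sup>+ x. f x \<partial>measure_pmf p) < \<infinity>" "g \<in> set_pmf p"
  shows "f g < \<infinity>"
proof -
  have "f g * ennreal (pmf p g) = (\<integral>\<^sup>+ x. f g * indicator {g} x \<partial>measure_pmf p)"
    by (simp add: emeasure_pmf_single)
  also have "\<dots> \<le> (\<integral>\<^sup>+ x. f x \<partial>measure_pmf p)"
    by (intro nn_integral_mono) (auto split: split_indicator)
  finally have le: "f g * ennreal (pmf p g) < \<infinity>" using assms(1) by (meson le_less_trans)
  have "0 < pmf p g" using assms(2) by (simp add: pmf_positive)
  show ?thesis
  proof (rule ccontr)
    assume "\<not> f g < \<infinity>"
    then have "f g = \<infinity>" by (simp add: not_less top_unique)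
    moreover have "ennreal (pmf p g) \<noteq> 0" using \<open>0 < pmf p g\<close> by simp
    ultimately have "f g * ennreal (pmf p g) = \<infinity>" by simp
    then show False using le by simp
  qed
qed

lemma round_integral2:
  "(\<integral>\<^sup>+ g. F g \<partial>measure_pmf (round_step h x \<pi> \<tau>)) =
   (\<integral>\<^sup>+ y. \<integral>\<^sup>+ k. F (h @ [(x, k = y, k)]) \<partial>measure_pmf \<pi> \<partial>measure_pmf \<tau>)"
  unfolding round_step_def by (subst pair_commute_pmf) (simp add: nn_integral_pair_pmf')

lemma primal_consD:
  "primal_consistent P ax aT \<Longrightarrow> realizable P h \<Longrightarrow> y \<in> set_pmf (aT h (ax h) \<pi>) \<Longrightarrow> realizable_ext P h (ax h) y"
  unfolding primal_consistent_def by blast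

definition Lrn where
  "Lrn P e h x = (if VV P h < \<infinity> \<and> {y. realizable_ext P h x y} \<noteq> {} then
     (SOME \<pi>. \<forall>y\<in>{y. realizable_ext P h x y}.
        (\<integral>\<^sup>+ k. VV P (h @ [(x, k = y, k)]) \<partial>measure_pmf \<pi>) \<le> VV P h + ennreal (e / 2 ^ Suc (length h)))
     else return_pmf undefined)"

lemma learner_bound:
  fixes P :: "('x, 'y::countable) pattern set"
  assumes pc: "pattern_class P" and A: "Adv P \<noteq> {}" and fin: "VV P [] < \<infinity>" and e: "0 < e"
    and cons: "primal_consistent P ax aT"
  shows "(\<integral>\<^sup>+ g. VV P g \<partial>measure_pmf (primal_hist (Lrn P e) ax aT n)) \<le> VV P [] + ennreal (e - e / 2 ^ n)"
proof (induction n)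
  case 0 then show ?case by simp
next
  case (Suc n)
  let ?L = "Lrn P e"
  let ?p = "primal_hist ?L ax aT n"
  have ifin: "(\<integral>\<^sup>+ g. VV P g \<partial>measure_pmf ?p) < \<infinity>"
  proof -
    have "VV P [] + ennreal (e - e / 2 ^ n) \<noteq> \<infinity>" using fin by (simp add: ennreal_add_eq_top)
    then show ?thesis using Suc.IH unfolding infinity_ennreal_def by (meson le_less_trans less_top)
  qed
  have step: "(\<integral>\<^sup>+ g'. VV P g' \<partial>measure_pmf (round_step g (ax g) (?L g (ax g)) (aT g (ax g) (?L g (ax g)))))
      \<le> VV P g + ennreal (e / 2 ^ Suc n)" if g: "g \<in> set_pmf ?p" for g
  proof -
    have rg: "realizable P g" "length g = n" using primal_support[OF pc cons g] by auto
    have Vg: "VV P g < \<infinity>" by (rule finite_at_support[OF ifin g])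
    let ?x = "ax g"
    let ?Y = "{y. realizable_ext P g ?x y}"
    let ?\<tau> = "aT g ?x (?L g ?x)"
    have tY: "set_pmf ?\<tau> \<subseteq> ?Y" using primal_consD[OF cons rg(1)] by blast
    have Yne: "?Y \<noteq> {}" using tY set_pmf_not_empty[of ?\<tau>] by blast
    have e2: "0 < e / 2 ^ Suc (length g)" by (intro divide_pos_pos e) simp
    have ex: "\<exists>\<pi>. \<forall>y\<in>?Y. (\<integral>\<^sup>+ k. VV P (g @ [(?x, k = y, k)]) \<partial>measure_pmf \<pi>) \<le> VV P g + ennreal (e / 2 ^ Suc (length g))"
      by (rule bellman_upper[OF A Vg Yne e2])
    have Lg: "?L g ?x = (SOME \<pi>. \<forall>y\<in>?Y. (\<integral>\<^sup>+ k. VV P (g @ [(?x, k = y, k)]) \<partial>measure_pmf \<pi>) \<le> VV P g + ennreal (e / 2 ^ Suc (length g)))"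
      using Vg Yne by (simp add: Lrn_def)
    have good: "\<forall>y\<in>?Y. (\<integral>\<^sup>+ k. VV P (g @ [(?x, k = y, k)]) \<partial>measure_pmf (?L g ?x)) \<le> VV P g + ennreal (e / 2 ^ Suc (length g))"
      unfolding Lg by (rule someI_ex[OF ex])
    have "(\<integral>\<^sup>+ g'. VV P g' \<partial>measure_pmf (round_step g ?x (?L g ?x) ?\<tau>)) =
          (\<integral>\<^sup>+ y. \<integral>\<^sup>+ k. VV P (g @ [(?x, k = y, k)]) \<partial>measure_pmf (?L g ?x) \<partial>measure_pmf ?\<tau>)"
      by (rule round_integral2)
    also have "\<dots> \<le> (\<integral>\<^sup>+ y. VV P g + ennreal (e / 2 ^ Suc (length g)) \<partial>measure_pmf ?\<tau>)"
      by (intro nn_integral_mono_AE) (use good tY in \<open>auto simp: AE_measure_pmf_iff\<close>)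
    also have "\<dots> = VV P g + ennreal (e / 2 ^ Suc (length g))" by simp
    finally show ?thesis using rg(2) by simp
  qed
  have sumeq: "ennreal (e - e / 2 ^ n) + ennreal (e / 2 ^ Suc n) = ennreal (e - e / 2 ^ Suc n)"
  proof -
    have "e / 2 ^ n \<le> e / 1" using e by (intro divide_left_mono) auto
    then have "e / 2 ^ n \<le> e" by simp
    then have "ennreal (e - e / 2 ^ n + e / 2 ^ Suc n) = ennreal (e - e / 2 ^ n) + ennreal (e / 2 ^ Suc n)"
      using e by (intro ennreal_plus) auto
    moreover have "e - e / 2 ^ n + e / 2 ^ Suc n = e - e / 2 ^ Suc n" by (simp add: field_simps)
    ultimately show ?thesis by simp
  qed
  have "(\<integral>\<^sup>+ g. VV P g \<partial>measure_pmf (primal_hist ?L ax aT (Suc n))) =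
        (\<integral>\<^sup>+ g. (\<integral>\<^sup>+ g'. VV P g' \<partial>measure_pmf (round_step g (ax g) (?L g (ax g)) (aT g (ax g) (?L g (ax g))))) \<partial>measure_pmf ?p)"
    by (simp add: Let_def)
  also have "\<dots> \<le> (\<integral>\<^sup>+ g. VV P g + ennreal (e / 2 ^ Suc n) \<partial>measure_pmf ?p)"
    by (intro nn_integral_mono_AE) (use step in \<open>auto simp: AE_measure_pmf_iff\<close>)
  also have "\<dots> = (\<integral>\<^sup>+ g. VV P g \<partial>measure_pmf ?p) + ennreal (e / 2 ^ Suc n)"
    by (simp add: nn_integral_add)
  also have "\<dots> \<le> VV P [] + ennreal (e - e / 2 ^ n) + ennreal (e / 2 ^ Suc n)"
    using Suc.IH by (simp add: add_right_mono)
  also have "\<dots> = VV P [] + ennreal (e - e / 2 ^ Suc n)" by (simp only: add.assoc sumeq)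
  finally show ?case .
qed

lemma optd_VV: "opt_d_bandit_adap P = VV P []"
proof -
  have S: "{(ax, aT). dual_consistent P ax aT} = Adv P" by (auto simp: Adv_def)
  have "opt_d_bandit_adap P = (SUP \<alpha>\<in>{(ax, aT). dual_consistent P ax aT}. INF L. dual_mistakes (fst \<alpha>) (snd \<alpha>) L)"
    unfolding opt_d_bandit_adap_def by (simp add: split_beta)
  also have "\<dots> = VV P []"
    unfolding S VV_def JJ_def MM_def EE_def dual_mistakes_def dual_hist_dfrom ..
  finally show ?thesis .
qed

lemma primal_dual_hist: "primal_hist L ax (\<lambda>h x \<pi>. aT h) n = dual_hist ax aT (\<lambda>h x \<tau>. L h x) n"
  by (induction n) (simp_all add: Let_def)

lemma easy_dir: "opt_d_bandit_adap P \<le> opt_bandit_adap P"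
  unfolding opt_bandit_adap_def
proof (rule INF_greatest)
  fix L
  show "opt_d_bandit_adap P \<le> (SUP (ax, aT)\<in>{(ax, aT). primal_consistent P ax aT}. primal_mistakes L ax aT)"
    unfolding opt_d_bandit_adap_def
  proof (rule SUP_least, clarify)
    fix ax aT assume dc: "dual_consistent P ax aT"
    have pc: "primal_consistent P ax (\<lambda>h x \<pi>. aT h)"
      using dc by (simp add: primal_consistent_def dual_consistent_def)
    have "(INF L'. dual_mistakes ax aT L') \<le> dual_mistakes ax aT (\<lambda>h x \<tau>. L h x)" by (rule INF_lower) simp
    also have "\<dots> = primal_mistakes L ax (\<lambda>h x \<pi>. aT h)"
      by (simp add: primal_mistakes_def dual_mistakes_def primal_dual_hist)
    also have "\<dots> \<le> (SUP (ax, aT)\<in>{(ax, aT). primal_consistent P ax aT}. primal_mistakes L ax aT)"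
      using pc by (intro SUP_upper2[of "(ax, \<lambda>h x \<pi>. aT h)"]) auto
    finally show "(INF L'. dual_mistakes ax aT L') \<le> (SUP (ax, aT)\<in>{(ax, aT). primal_consistent P ax aT}. primal_mistakes L ax aT)" .
  qed
qed

theorem lemma3p1:
  fixes P :: "('x, 'y::countable) pattern set"
  assumes "pattern_class P"
  shows "opt_bandit_adap P = opt_d_bandit_adap P"
proof (rule antisym)
  show "opt_d_bandit_adap P \<le> opt_bandit_adap P" by (rule easy_dir)
next
  note pc = assms
  let ?C = "{(ax, aT). primal_consistent P ax aT}"
  show "opt_bandit_adap P \<le> opt_d_bandit_adap P"
  proof (cases "?C = {}")
    case True
    then show ?thesis by (simp add: opt_bandit_adap_def)
  next
    case False
    then obtain ax0 aT0 where c0: "primal_consistent P ax0 aT0" by auto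
    have "(ax0, \<lambda>h. aT0 h (ax0 h) (return_pmf undefined)) \<in> Adv P"
      using primal_consD[OF c0] by (auto simp: Adv_def dual_consistent_def)
    then have A: "Adv P \<noteq> {}" by blast
    show ?thesis
    proof (cases "VV P [] = \<infinity>")
      case True
      then show ?thesis by (simp add: optd_VV)
    next
      case False
      then have fin: "VV P [] < \<infinity>" by (simp add: less_top)
      show ?thesis unfolding optd_VV
      proof (rule ennreal_le_epsilon)
        fix e :: real assume e: "0 < e"
        have "opt_bandit_adap P \<le> (SUP (ax, aT)\<in>?C. primal_mistakes (Lrn P e) ax aT)"
          unfolding opt_bandit_adap_def by (rule INF_lower) simp
        also have "\<dots> \<le> VV P [] + ennreal e"
        proof (rule SUP_least, clarify)
          fix ax aT assume cons: "primal_consistent P ax aT"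
          show "primal_mistakes (Lrn P e) ax aT \<le> VV P [] + ennreal e"
            unfolding primal_mistakes_def
          proof (rule SUP_least)
            fix n
            have "(\<integral>\<^sup>+ h. of_nat (mistakes h) \<partial>measure_pmf (primal_hist (Lrn P e) ax aT n))
                  \<le> (\<integral>\<^sup>+ h. VV P h \<partial>measure_pmf (primal_hist (Lrn P e) ax aT n))"
              by (intro nn_integral_mono VV_ge_mistakes[OF A])
            also have "\<dots> \<le> VV P [] + ennreal (e - e / 2 ^ n)"
              by (rule learner_bound[OF pc A fin e cons])
            also have "\<dots> \<le> VV P [] + ennreal e"
              using e by (intro add_left_mono ennreal_leI) simp
            finally show "(\<integral>\<^sup>+ h. of_nat (mistakes h) \<partial>measure_pmf (primal_hist (Lrn P e) ax aT n)) \<le> VV P [] + ennreal e" .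
          qed
        qed
        finally show "opt_bandit_adap P \<le> VV P [] + ennreal e" .
      qed
    qed
  qed
qed

end
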